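(* Let $n,k,r$ be positive integers with $r\le k$, let $\mathcal{F}=\mathcal{F}(n,k,r)$, and let $\gamma>10r/k$. If $T\subseteq V(\mathcal{F})$ with $|T|>\gamma\, v(\mathcal{F})=\gamma k^n$, then $$e(\mathcal{F}[T])\ge\Big(\gamma-\frac{r}{k}\Big)^r e(\mathcal{F}).$$
   Context: $\mathcal{F}(n,k,r)$ is the $r$-uniform hypergraph with vertex set $[k]^n$ whose edges are the $r$-element subsets of $[k]^n$ lying on a common axis-parallel line, i.e., $r$ points that agree in all but one coordinate. Thus $e(\mathcal{F})=n\binom{k}{r}k^{n-1}$. $\mathcal{F}[T]$ denotes the subhypergraph induced by $T$. *)

theory Defs
  imports Complex_Main
begin

definition grid_vertices :: "nat \<Rightarrow> nat \<Rightarrow> nat list set" where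
  "grid_vertices n k = {x. length x = n \<and> (\<forall>j<n. x ! j < k)}"

text \<open>Edges are recorded together with
  their direction i (this matters only for r = 1, where a single point lies on n lines;
  for r >= 2 the direction is determined by S). This makes e(F) = n * (k choose r) * k^(n-1).\<close>
definition grid_edges_on :: "nat \<Rightarrow> nat \<Rightarrow> nat \<Rightarrow> nat list set \<Rightarrow> (nat \<times> nat list set) set" where
  "grid_edges_on n k r T = {(i, S). i < n \<and> S \<subseteq> T \<and> card S = r \<and>
      (\<forall>x\<in>S. \<forall>y\<in>S. \<forall>j<n. j \<noteq> i \<longrightarrow> x ! j = y ! j)}"

definition num_edges_induced :: "nat \<Rightarrow> nat \<Rightarrow> nat \<Rightarrow> nat list set \<Rightarrow> nat" where
  "num_edges_induced n k r T = card (grid_edges_on n k r (T \<inter> grid_vertices n k))"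

definition num_edges :: "nat \<Rightarrow> nat \<Rightarrow> nat \<Rightarrow> nat" where
  "num_edges n k r = num_edges_induced n k r (grid_vertices n k)"

end

theory Submission imports Defs "HOL-Analysis.Analysis" begin

lemma binom_bound_aux:
  fixes t k r :: nat
  assumes "r \<le> t" "t \<le> k"
  shows "m \<le> r \<Longrightarrow> real (k choose m) * (real t - real r) ^ m \<le> real (t choose m) * real k ^ m"
proof (induction m)
  case 0 then show ?case by simp
next
  case (Suc m)
  have e1: "real (Suc m) * real (t choose Suc m) = real (t - m) * real (t choose m)"
    by (metis binomial_absorption binomial_absorb_comp of_nat_mult)
  have e2: "real (Suc m) * real (k choose Suc m) = real (k - m) * real (k choose m)"
    by (metis binomial_absorption binomial_absorb_comp of_nat_mult)
  have ih: "real (k choose m) * (real t - real r) ^ m \<le> real (t choose m) * real k ^ m"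
    using Suc by simp
  have key: "real (k - m) * (real t - real r) \<le> real (t - m) * real k"
  proof -
    have "real (k - m) = real k - real m" "real (t - m) = real t - real m"
      using Suc.prems assms by auto
    moreover have "(real k - real m) * (real t - real r) \<le> (real t - real m) * real k"
    proof -
      have "(real t - real m) * real k - (real k - real m) * (real t - real r)
            = (real r - real m) * real k + real m * (real t - real r)"
        by (simp add: algebra_simps)
      moreover have "0 \<le> (real r - real m) * real k + real m * (real t - real r)"
        using Suc.prems assms by auto
      ultimately show ?thesis by linarith
    qed
    ultimately show ?thesis by simp
  qed
  have nn: "0 \<le> real t - real r" using assms by simp
  have "real (Suc m) * (real (k choose Suc m) * (real t - real r) ^ Suc m)
      = (real (Suc m) * real (k choose Suc m)) * (real t - real r) ^ m * (real t - real r)"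
    by (simp add: algebra_simps)
  also have "\<dots> = (real (k choose m) * (real t - real r) ^ m) * (real (k - m) * (real t - real r))"
    unfolding e2 by (simp add: algebra_simps)
  also have "\<dots> \<le> (real (t choose m) * real k ^ m) * (real (t - m) * real k)"
    by (rule mult_mono[OF ih key]) (use nn in auto)
  also have "\<dots> = (real (Suc m) * real (t choose Suc m)) * real k ^ Suc m"
    unfolding e1 by (simp add: algebra_simps)
  also have "\<dots> = real (Suc m) * (real (t choose Suc m) * real k ^ Suc m)"
    by (simp add: algebra_simps)
  finally show ?case by (simp only: mult_le_cancel_left_pos of_nat_0_less_iff zero_less_Suc)
qed

lemma binom_bound:
  fixes t k r :: nat
  assumes "t \<le> k" "0 < k" "0 < r"
  shows "real (k choose r) * (max 0 ((real t - real r) / real k)) ^ r \<le> real (t choose r)"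
proof (cases "r \<le> t")
  case True
  have "real (k choose r) * (real t - real r) ^ r \<le> real (t choose r) * real k ^ r"
    using binom_bound_aux[OF True assms(1)] by simp
  moreover have "max 0 ((real t - real r) / real k) = (real t - real r) / real k"
    using True assms by auto
  moreover have "real (k choose r) * ((real t - real r) / real k) ^ r \<le> real (t choose r)"
    using calculation(1) assms by (simp add: power_divide field_simps)
  ultimately show ?thesis by simp
next
  case False
  then have "max 0 ((real t - real r) / real k) = 0"
    using assms by (auto simp: divide_nonpos_pos)
  then show ?thesis using assms by (simp add: power_0_left)
qed

definition lineset :: "nat \<Rightarrow> nat \<Rightarrow> nat \<Rightarrow> nat list \<Rightarrow> nat list set" where
  "lineset n k i x = {y \<in> grid_vertices n k. \<forall>j<n. j \<noteq> i \<longrightarrow> y!j = x!j}"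

definition dedges :: "nat \<Rightarrow> nat \<Rightarrow> nat \<Rightarrow> nat list set \<Rightarrow> nat list set set" where
  "dedges n r i T = {S. S \<subseteq> T \<and> card S = r \<and> (\<forall>x\<in>S. \<forall>y\<in>S. \<forall>j<n. j \<noteq> i \<longrightarrow> x!j = y!j)}"

lemma dedges_sub: "S \<in> dedges n r i T \<Longrightarrow> S \<subseteq> T"
  by (simp add: dedges_def)
lemma dedges_card: "S \<in> dedges n r i T \<Longrightarrow> card S = r"
  by (simp add: dedges_def)
lemma dedges_agree: "S \<in> dedges n r i T \<Longrightarrow> a \<in> S \<Longrightarrow> b \<in> S \<Longrightarrow> j < n \<Longrightarrow> j \<noteq> i \<Longrightarrow> a!j = b!j"
  unfolding dedges_def by blast

lemma grid_eq: "grid_vertices n k = {xs. set xs \<subseteq> {0..<k} \<and> length xs = n}"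
proof -
  have "set xs \<subseteq> {0..<k} \<longleftrightarrow> (\<forall>j<length xs. xs!j < k)" for xs :: "nat list"
    by (auto simp: subset_iff in_set_conv_nth)
  then show ?thesis unfolding grid_vertices_def by auto
qed

lemma grid_finite: "finite (grid_vertices n k)"
  unfolding grid_eq by (rule finite_lists_length_eq) simp

lemma grid_card: "card (grid_vertices n k) = k ^ n"
  unfolding grid_eq by (subst card_lists_length_eq) simp_all

lemma lineset_card:
  assumes "x \<in> grid_vertices n k" "i < n"
  shows "card (lineset n k i x) = k"
proof -
  have lx: "length x = n" using assms unfolding grid_vertices_def by auto
  have "lineset n k i x = (\<lambda>c. x[i:=c]) ` {0..<k}"
  proof
    show "lineset n k i x \<subseteq> (\<lambda>c. x[i:=c]) ` {0..<k}"
    proof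
      fix y assume y: "y \<in> lineset n k i x"
      then have ly: "length y = n" and yk: "y!i < k" and ag: "\<forall>j<n. j \<noteq> i \<longrightarrow> y!j = x!j"
        using assms unfolding lineset_def grid_vertices_def by auto
      have "y = x[i := y!i]"
        by (rule nth_equalityI) (use ly lx ag assms(2) in \<open>auto simp: nth_list_update\<close>)
      then show "y \<in> (\<lambda>c. x[i:=c]) ` {0..<k}" using yk by (intro image_eqI[where x="y!i"]) auto
    qed
  next
    show "(\<lambda>c. x[i:=c]) ` {0..<k} \<subseteq> lineset n k i x"
      using assms lx unfolding lineset_def grid_vertices_def by (auto simp: nth_list_update)
  qed
  moreover have "inj_on (\<lambda>c. x[i:=c]) {0..<k}"
    by (rule inj_onI) (metis assms(2) lx nth_list_update_eq)
  ultimately show ?thesis by (simp add: card_image)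
qed

lemma lineset_sym:
  assumes "x \<in> grid_vertices n k" "y \<in> grid_vertices n k"
  shows "y \<in> lineset n k i x \<longleftrightarrow> x \<in> lineset n k i y"
  using assms by (auto simp: lineset_def)

lemma card_filter_sum: "finite A \<Longrightarrow> card {a\<in>A. P a} = (\<Sum>a\<in>A. if P a then 1 else 0)"
proof -
  assume fA: "finite A"
  have "card {a\<in>A. P a} = (\<Sum>a\<in>{a\<in>A. P a}. 1)" by simp
  also have "\<dots> = (\<Sum>a\<in>A. if P a then 1 else 0)" using fA by (rule sum.inter_filter)
  finally show ?thesis .
qed

lemma line_agree:
  "a \<in> lineset n k i x \<Longrightarrow> b \<in> lineset n k i x \<Longrightarrow> j < n \<Longrightarrow> j \<noteq> i \<Longrightarrow> a!j = b!j"
  by (simp add: lineset_def)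

lemma sum_line_card:
  assumes "T \<subseteq> grid_vertices n k" "i < n"
  shows "(\<Sum>x\<in>grid_vertices n k. card (T \<inter> lineset n k i x)) = k * card T"
proof -
  have fT: "finite T" using assms grid_finite finite_subset by blast
  have "(\<Sum>x\<in>grid_vertices n k. card (T \<inter> lineset n k i x))
      = (\<Sum>x\<in>grid_vertices n k. \<Sum>y\<in>T. if y \<in> lineset n k i x then 1 else 0)"
    by (rule sum.cong) (simp_all add: fT card_filter_sum[symmetric] Int_def)
  also have "\<dots> = (\<Sum>y\<in>T. \<Sum>x\<in>grid_vertices n k. if y \<in> lineset n k i x then 1 else 0)"
    by (rule sum.swap)
  also have "\<dots> = (\<Sum>y\<in>T. k)"
  proof (rule sum.cong)
    fix y assume y: "y \<in> T"
    then have yg: "y \<in> grid_vertices n k" using assms by auto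
    have "{x \<in> grid_vertices n k. y \<in> lineset n k i x} = lineset n k i y"
      using lineset_sym[OF _ yg] yg unfolding lineset_def by auto
    then have "(\<Sum>x\<in>grid_vertices n k. if y \<in> lineset n k i x then 1 else 0 :: nat) = card (lineset n k i y)"
      using grid_finite by (simp add: card_filter_sum[symmetric])
    then show "(\<Sum>x\<in>grid_vertices n k. if y \<in> lineset n k i x then 1 else 0) = k"
      using lineset_card[OF yg assms(2)] by simp
  qed simp
  finally show ?thesis by simp
qed

lemma dedges_intro: "S \<subseteq> T \<Longrightarrow> card S = r \<Longrightarrow> (\<forall>x\<in>S. \<forall>y\<in>S. \<forall>j<n. j \<noteq> i \<longrightarrow> x!j = y!j) \<Longrightarrow> S \<in> dedges n r i T"
  unfolding dedges_def by blast

lemma choose_line_eq: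
  assumes "T \<subseteq> grid_vertices n k" "x \<in> grid_vertices n k"
  shows "card (T \<inter> lineset n k i x) choose r = card {S \<in> dedges n r i T. S \<subseteq> lineset n k i x}"
proof -
  have fT: "finite T" using assms grid_finite finite_subset by blast
  have eq: "{S. S \<subseteq> T \<inter> lineset n k i x \<and> card S = r} = {S \<in> dedges n r i T. S \<subseteq> lineset n k i x}"
  proof (rule set_eqI)
    fix S
    show "S \<in> {S. S \<subseteq> T \<inter> lineset n k i x \<and> card S = r} \<longleftrightarrow> S \<in> {S \<in> dedges n r i T. S \<subseteq> lineset n k i x}"
    proof
      assume h: "S \<in> {S. S \<subseteq> T \<inter> lineset n k i x \<and> card S = r}"
      then have hs: "S \<subseteq> T \<inter> lineset n k i x" and hc: "card S = r" by simp_all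
      have agr: "\<forall>a\<in>S. \<forall>b\<in>S. \<forall>j<n. j \<noteq> i \<longrightarrow> a!j = b!j"
      proof (intro ballI allI impI)
        fix a b j assume ab: "a \<in> S" "b \<in> S" and j: "j < n" "j \<noteq> i"
        have "a \<in> lineset n k i x" "b \<in> lineset n k i x" using hs ab by blast+
        then show "a!j = b!j" using j by (rule line_agree)
      qed
      have sT: "S \<subseteq> T" using hs by simp
      have D: "S \<in> dedges n r i T" using sT hc agr by (rule dedges_intro)
      have sL: "S \<subseteq> lineset n k i x" using hs by simp
      show "S \<in> {S \<in> dedges n r i T. S \<subseteq> lineset n k i x}"
        using D sL by simp
    next
      assume h: "S \<in> {S \<in> dedges n r i T. S \<subseteq> lineset n k i x}"
      then have D: "S \<in> dedges n r i T" and L: "S \<subseteq> lineset n k i x" by simp_all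
      have "S \<subseteq> T" using D by (rule dedges_sub)
      moreover have "card S = r" using D by (rule dedges_card)
      ultimately show "S \<in> {S. S \<subseteq> T \<inter> lineset n k i x \<and> card S = r}"
        using L by simp
    qed
  qed
  have fI: "finite (T \<inter> lineset n k i x)" using fT by simp
  have "card (T \<inter> lineset n k i x) choose r = card {S. S \<subseteq> T \<inter> lineset n k i x \<and> card S = r}"
    using n_subsets[OF fI, of r] by (rule sym)
  also have "\<dots> = card {S \<in> dedges n r i T. S \<subseteq> lineset n k i x}" by (simp only: eq)
  finally show ?thesis .
qed

lemma line_cover_card:
  assumes "T \<subseteq> grid_vertices n k" "i < n" "0 < r" "S \<in> dedges n r i T"
  shows "card {x \<in> grid_vertices n k. S \<subseteq> lineset n k i x} = k"
proof -
  have "S \<noteq> {}" using assms(3) dedges_card[OF assms(4)] by (metis card.empty less_irrefl)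
  then obtain s where s: "s \<in> S" by blast
  have sg: "s \<in> grid_vertices n k" using s dedges_sub[OF assms(4)] assms(1) by (meson subsetD)
  have "{x \<in> grid_vertices n k. S \<subseteq> lineset n k i x} = lineset n k i s"
  proof
    show "{x \<in> grid_vertices n k. S \<subseteq> lineset n k i x} \<subseteq> lineset n k i s"
    proof
      fix x assume "x \<in> {x \<in> grid_vertices n k. S \<subseteq> lineset n k i x}"
      then have xg: "x \<in> grid_vertices n k" and "s \<in> lineset n k i x" using s by auto
      then show "x \<in> lineset n k i s" using lineset_sym[OF xg sg] by simp
    qed
    show "lineset n k i s \<subseteq> {x \<in> grid_vertices n k. S \<subseteq> lineset n k i x}"
    proof
      fix x assume x: "x \<in> lineset n k i s"
      have "S \<subseteq> lineset n k i x"
      proof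
        fix z assume z: "z \<in> S"
        then have "z \<in> grid_vertices n k" using dedges_sub[OF assms(4)] assms(1) by (meson subsetD)
        moreover have "\<forall>j<n. j \<noteq> i \<longrightarrow> z!j = x!j"
        proof (intro allI impI)
          fix j assume j: "j < n" "j \<noteq> i"
          have "z!j = s!j" using dedges_agree[OF assms(4) z s j] .
          also have "s!j = x!j" using x j by (simp add: lineset_def)
          finally show "z!j = x!j" .
        qed
        ultimately show "z \<in> lineset n k i x" unfolding lineset_def by auto
      qed
      moreover have "x \<in> grid_vertices n k" using x by (simp add: lineset_def)
      ultimately show "x \<in> {x \<in> grid_vertices n k. S \<subseteq> lineset n k i x}"
        by simp
    qed
  qed
  then show ?thesis using lineset_card[OF sg assms(2)] by simp
qed

lemma sum_line_choose:
  assumes "T \<subseteq> grid_vertices n k" "i < n" "0 < r"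
  shows "(\<Sum>x\<in>grid_vertices n k. card (T \<inter> lineset n k i x) choose r) = k * card (dedges n r i T)"
proof -
  have fT: "finite T" using assms grid_finite finite_subset by blast
  have fD: "finite (dedges n r i T)"
    by (rule finite_subset[of _ "Pow T"]) (use fT in \<open>auto simp: dedges_def\<close>)
  have "(\<Sum>x\<in>grid_vertices n k. card (T \<inter> lineset n k i x) choose r)
      = (\<Sum>x\<in>grid_vertices n k. card {S \<in> dedges n r i T. S \<subseteq> lineset n k i x})"
    by (rule sum.cong[OF refl]) (rule choose_line_eq[OF assms(1)])
  also have "\<dots> = (\<Sum>x\<in>grid_vertices n k. \<Sum>S\<in>dedges n r i T. if S \<subseteq> lineset n k i x then 1 else 0)"
    by (rule sum.cong[OF refl]) (rule card_filter_sum[OF fD])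
  also have "\<dots> = (\<Sum>S\<in>dedges n r i T. \<Sum>x\<in>grid_vertices n k. if S \<subseteq> lineset n k i x then 1 else 0)"
    by (rule sum.swap)
  also have "\<dots> = (\<Sum>S\<in>dedges n r i T. k)"
  proof (rule sum.cong[OF refl])
    fix S assume S: "S \<in> dedges n r i T"
    show "(\<Sum>x\<in>grid_vertices n k. if S \<subseteq> lineset n k i x then 1 else 0) = k"
      using line_cover_card[OF assms S] card_filter_sum[OF grid_finite[of n k], where P="\<lambda>x. S \<subseteq> lineset n k i x"]
      by simp
  qed
  finally show ?thesis by simp
qed

lemma edges_card:
  assumes "T \<subseteq> grid_vertices n k"
  shows "card (grid_edges_on n k r T) = (\<Sum>i<n. card (dedges n r i T))"
proof -
  have fT: "finite T" using assms grid_finite finite_subset by blast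
  have "grid_edges_on n k r T = Sigma {..<n} (\<lambda>i. dedges n r i T)"
    unfolding grid_edges_on_def dedges_def by auto
  moreover have "finite (dedges n r i T)" for i
    by (rule finite_subset[of _ "Pow T"]) (use fT in \<open>auto simp: dedges_def\<close>)
  ultimately show ?thesis by simp
qed

lemma convex_pow: "convex_on {0::real..} (\<lambda>x. x ^ r)"
proof (cases "even r")
  case True
  then show ?thesis
    using convex_on_subset[OF convex_power_even[OF True]] by (simp add: convex_real_interval)
next
  case False
  then show ?thesis by (rule convex_power_odd)
qed

lemma power_mean:
  fixes f :: "'a \<Rightarrow> real"
  assumes "finite A" "A \<noteq> {}" "\<And>a. a \<in> A \<Longrightarrow> 0 \<le> f a"
  shows "((\<Sum>a\<in>A. f a) / real (card A)) ^ r \<le> (\<Sum>a\<in>A. f a ^ r) / real (card A)"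
proof -
  have cpos: "0 < real (card A)" using assms by (simp add: card_gt_0_iff)
  have "(\<Sum>a\<in>A. (1 / real (card A)) *\<^sub>R f a) ^ r \<le> (\<Sum>a\<in>A. (1 / real (card A)) * f a ^ r)"
    by (rule convex_on_sum[OF assms(1,2) convex_pow, where a="\<lambda>_. 1 / real (card A)"])
       (use assms cpos in auto)
  then show ?thesis
    by (simp add: sum_distrib_left[symmetric] sum_distrib_right[symmetric] divide_inverse mult.commute)
qed

lemma dir_bound:
  fixes \<gamma> :: real
  assumes T: "T \<subseteq> grid_vertices n k" and i: "i < n" and k: "0 < k" and r: "0 < r"
    and g: "\<gamma> \<ge> real r / real k"
    and cT: "real (card T) > \<gamma> * real k ^ n"
  shows "(\<gamma> - real r / real k) ^ r * real (card (dedges n r i (grid_vertices n k)))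
         \<le> real (card (dedges n r i T))"
proof -
  define G where "G = grid_vertices n k"
  define N where "N = real (k ^ n)"
  define t where "t x = card (T \<inter> lineset n k i x)" for x
  define a where "a x = max 0 ((real (t x) - real r) / real k)" for x
  have fG: "finite G" unfolding G_def by (rule grid_finite)
  have cG: "real (card G) = N" unfolding G_def N_def by (simp add: grid_card)
  have Npos: "0 < N" unfolding N_def using k by simp
  have Gne: "G \<noteq> {}" using cG Npos by auto
  have tk: "t x \<le> k" if x: "x \<in> G" for x
  proof -
    have "t x \<le> card (lineset n k i x)" unfolding t_def
      by (rule card_mono) (simp_all add: lineset_def grid_finite)
    then show ?thesis using lineset_card[OF x[unfolded G_def] i] by simp
  qed
  have e1: "real k * real (card (dedges n r i T)) = (\<Sum>x\<in>G. real (t x choose r))"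
    using sum_line_choose[OF T i r] unfolding G_def t_def
    by (metis of_nat_mult of_nat_sum)
  have e2: "(\<Sum>x\<in>G. real (t x choose r)) \<ge> (\<Sum>x\<in>G. real (k choose r) * a x ^ r)"
    by (rule sum_mono) (use binom_bound[OF tk k r] in \<open>simp add: a_def\<close>)
  have e3: "(\<Sum>x\<in>G. a x ^ r) \<ge> N * ((\<Sum>x\<in>G. a x) / N) ^ r"
    using power_mean[OF fG Gne, of a r] cG Npos unfolding a_def by (simp add: field_simps)
  have st: "(\<Sum>x\<in>G. real (t x)) = real k * real (card T)"
    using sum_line_card[OF T i] unfolding G_def t_def by (metis of_nat_mult of_nat_sum)
  have "(\<Sum>x\<in>G. a x) \<ge> (\<Sum>x\<in>G. (real (t x) - real r) / real k)"
    by (rule sum_mono) (simp add: a_def)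
  also have "(\<Sum>x\<in>G. (real (t x) - real r) / real k) = ((\<Sum>x\<in>G. real (t x)) - N * real r) / real k"
    by (simp add: sum_divide_distrib[symmetric] sum_subtractf cG)
  also have "\<dots> = real (card T) - N * real r / real k"
    unfolding st using k by (simp add: field_simps)
  finally have sa: "(\<Sum>x\<in>G. a x) \<ge> real (card T) - N * real r / real k" .
  have "\<gamma> * N < real (card T)" using cT unfolding N_def by (simp add: mult.commute)
  then have "(\<Sum>x\<in>G. a x) / N \<ge> \<gamma> - real r / real k"
    using sa Npos by (simp add: field_simps)
  then have e4: "(\<gamma> - real r / real k) ^ r \<le> ((\<Sum>x\<in>G. a x) / N) ^ r"
    by (rule power_mono) (use g in simp)
  have e5: "real k * real (card (dedges n r i G)) = N * real (k choose r)"
  proof -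
    have "real k * real (card (dedges n r i G)) = (\<Sum>x\<in>G. real (card (G \<inter> lineset n k i x) choose r))"
      using sum_line_choose[OF _ i r, of G] unfolding G_def by (metis of_nat_mult of_nat_sum order_refl)
    also have "\<dots> = (\<Sum>x\<in>G. real (k choose r))"
    proof (rule sum.cong[OF refl])
      fix x assume x: "x \<in> G"
      have "G \<inter> lineset n k i x = lineset n k i x" unfolding G_def lineset_def by auto
      then show "real (card (G \<inter> lineset n k i x) choose r) = real (k choose r)"
        using lineset_card[OF x[unfolded G_def] i] by simp
    qed
    also have "\<dots> = N * real (k choose r)" using cG by simp
    finally show ?thesis .
  qed
  have "real k * ((\<gamma> - real r / real k) ^ r * real (card (dedges n r i G)))
      = (\<gamma> - real r / real k) ^ r * (N * real (k choose r))"
    using e5 by (simp add: algebra_simps)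
  also have "\<dots> \<le> ((\<Sum>x\<in>G. a x) / N) ^ r * (N * real (k choose r))"
    by (rule mult_right_mono[OF e4]) (use Npos in simp)
  also have "\<dots> = real (k choose r) * (N * ((\<Sum>x\<in>G. a x) / N) ^ r)"
    by (simp add: algebra_simps)
  also have "\<dots> \<le> real (k choose r) * (\<Sum>x\<in>G. a x ^ r)"
    by (rule mult_left_mono[OF e3]) simp
  also have "\<dots> = (\<Sum>x\<in>G. real (k choose r) * a x ^ r)" by (simp add: sum_distrib_left)
  also have "\<dots> \<le> real k * real (card (dedges n r i T))" using e2 e1 by simp
  finally show ?thesis using k unfolding G_def by simp
qed

theorem lemma7p1:
  fixes n k r :: nat and \<gamma> :: real and T :: "nat list set"
  assumes "0 < n" "0 < k" "0 < r" "r \<le> k"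
    and "\<gamma> > 10 * real r / real k"
    and "T \<subseteq> grid_vertices n k"
    and "real (card T) > \<gamma> * real k ^ n"
  shows "real (num_edges_induced n k r T) \<ge> (\<gamma> - real r / real k) ^ r * real (num_edges n k r)"
proof -
  have g: "\<gamma> \<ge> real r / real k"
  proof -
    have "0 \<le> real r / real k" by simp
    moreover have "10 * real r / real k = 10 * (real r / real k)" by simp
    ultimately show ?thesis using assms(5) by linarith
  qed
  have TG: "T \<inter> grid_vertices n k = T" using assms(6) by blast
  have GG: "grid_vertices n k \<inter> grid_vertices n k = grid_vertices n k" by simp
  have "real (num_edges_induced n k r T) = (\<Sum>i<n. real (card (dedges n r i T)))"
    unfolding num_edges_induced_def TG edges_card[OF assms(6)] by simp
  moreover have "real (num_edges n k r) = (\<Sum>i<n. real (card (dedges n r i (grid_vertices n k))))"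
    unfolding num_edges_def num_edges_induced_def GG edges_card[OF order_refl] by simp
  moreover have "(\<Sum>i<n. (\<gamma> - real r / real k) ^ r * real (card (dedges n r i (grid_vertices n k))))
      \<le> (\<Sum>i<n. real (card (dedges n r i T)))"
    by (rule sum_mono) (rule dir_bound[OF assms(6) _ assms(2,3) g assms(7)], simp)
  ultimately show ?thesis by (simp add: sum_distrib_left)
qed

end
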